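(* Let $n\ge1$, $r\ge1$ and $\underline{m}=(m_0,\dots,m_n)$ positive integers. The projection $\sum_{i=0}^n p_{v_i^0}$ is full in $C^*\big(\overline{L}_{2n+1}^{r;\underline{m}}\big)$, i.e. the closed two-sided ideal it generates is all of $C^*\big(\overline{L}_{2n+1}^{r;\underline{m}}\big)$.
   Context: Graph conventions: for a directed graph $E=(E^0,E^1,r,s)$, $C^*(E)$ is the universal $C^*$-algebra generated by mutually orthogonal projections $p_v$ ($v\in E^0$) and partial isometries $s_e$ ($e\in E^1$) with mutually orthogonal ranges such that $s_e^*s_e=p_{r(e)}$, $s_es_e^*\le p_{s(e)}$, and $p_v=\sum_{s(e)=v}s_es_e^*$ whenever $s^{-1}(v)$ is finite and nonempty. $\Lambda=L_{2n+1}\times_c\mathbb{Z}_r$ is the graph with vertices $(v_i,k)$, $0\le i\le n$, $k\in\mathbb{Z}_r$, and edges $(e_{ij},k)$, $0\le i\le j\le n$, $k\in\mathbb{Z}_r$, with source $(v_i,k-m_i\bmod r)$ and range $(v_j,k)$. A path from $(v_i,s)$ to $(v_j,t)$ is admissible if none of the vertices it passes through other than its source and range lies in $\{(v_\ell,k): i\le\ell\le j,\ 0\le k\le\gcd(m_\ell,r)-1\}$; $n_{ij}^{st}$ is the number of such paths. $H$ is the smallest hereditary subset of $\Lambda^0$ containing all $(v_i,0)$, and $S_i=\{k\in\{0,\dots,\gcd(m_i,r)-1\}:(v_i,k)\in H\}$ (note $0\in S_i$). The graph $\overline{L}_{2n+1}^{r;\underline{m}}$ has vertices $v_i^k$ ($k\in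 S_i$) and edges $e_{ij;a}^{st}$ ($0\le i\le j\le n$, $s\in S_i$, $t\in S_j$, $1\le a\le n_{ij}^{st}$) from $v_i^s$ to $v_j^t$. *)

theory Defs
  imports "HOL-Analysis.Analysis"
begin

class cstar_algebra = banach + real_normed_algebra +
  fixes cscale :: "complex \<Rightarrow> 'a \<Rightarrow> 'a"
    and cstar :: "'a \<Rightarrow> 'a"
  assumes cscale_of_real: "cscale (complex_of_real c) x = scaleR c x"
    and cscale_add_left: "cscale (a + b) x = cscale a x + cscale b x"
    and cscale_add_right: "cscale a (x + y) = cscale a x + cscale a y"
    and cscale_mult: "cscale (a * b) x = cscale a (cscale b x)"
    and cscale_one: "cscale 1 x = x"
    and norm_cscale: "norm (cscale a x) = cmod a * norm x"
    and cscale_mult_left: "cscale a (x * y) = cscale a x * y"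
    and cscale_mult_right: "cscale a (x * y) = x * cscale a y"
    and cstar_cstar: "cstar (cstar x) = x"
    and cstar_add: "cstar (x + y) = cstar x + cstar y"
    and cstar_cscale: "cstar (cscale a x) = cscale (cnj a) (cstar x)"
    and cstar_mult: "cstar (x * y) = cstar y * cstar x"
    and cstar_identity: "norm (cstar x * x) = norm x ^ 2"

definition cstar_subalgebra :: "'a::cstar_algebra set \<Rightarrow> bool" where
  "cstar_subalgebra B \<longleftrightarrow> closed B \<and> 0 \<in> B \<and>
     (\<forall>x\<in>B. \<forall>y\<in>B. x + y \<in> B \<and> x * y \<in> B) \<and>
     (\<forall>c. \<forall>x\<in>B. cscale c x \<in> B) \<and> (\<forall>x\<in>B. cstar x \<in> B)"

definition cstar_gen :: "'a::cstar_algebra set \<Rightarrow> 'a set" where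
  "cstar_gen G = \<Inter>{B. G \<subseteq> B \<and> cstar_subalgebra B}"

definition closed_ideal_in :: "'a::cstar_algebra set \<Rightarrow> 'a set \<Rightarrow> bool" where
  "closed_ideal_in D I \<longleftrightarrow> I \<subseteq> D \<and> closed I \<and> 0 \<in> I \<and>
     (\<forall>x\<in>I. \<forall>y\<in>I. x + y \<in> I) \<and> (\<forall>c. \<forall>x\<in>I. cscale c x \<in> I) \<and>
     (\<forall>d\<in>D. \<forall>x\<in>I. d * x \<in> I \<and> x * d \<in> I)"

definition ideal_gen_in :: "'a::cstar_algebra set \<Rightarrow> 'a \<Rightarrow> 'a set" where
  "ideal_gen_in D p = \<Inter>{I. closed_ideal_in D I \<and> p \<in> I}"

text \<open>A Cuntz--Krieger E-family in a C*-algebra for a directed graph E = (V, Ed, rg, sr),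
with the conventions: s_e^* s_e = p_{r(e)}, s_e s_e^* \<le> p_{s(e)}.\<close>
definition CK_family ::
  "'v set \<Rightarrow> 'e set \<Rightarrow> ('e \<Rightarrow> 'v) \<Rightarrow> ('e \<Rightarrow> 'v) \<Rightarrow> ('v \<Rightarrow> 'a::cstar_algebra) \<Rightarrow> ('e \<Rightarrow> 'a) \<Rightarrow> bool"
  where
  "CK_family V Ed sr rg P S \<longleftrightarrow>
     (\<forall>v\<in>V. P v * P v = P v \<and> cstar (P v) = P v) \<and>
     (\<forall>v\<in>V. \<forall>w\<in>V. v \<noteq> w \<longrightarrow> P v * P w = 0) \<and>
     (\<forall>e\<in>Ed. cstar (S e) * S e = P (rg e)) \<and>
     (\<forall>e\<in>Ed. P (sr e) * (S e * cstar (S e)) = S e * cstar (S e)) \<and>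
     (\<forall>e\<in>Ed. \<forall>f\<in>Ed. e \<noteq> f \<longrightarrow> (S e * cstar (S e)) * (S f * cstar (S f)) = 0) \<and>
     (\<forall>v\<in>V. finite {e\<in>Ed. sr e = v} \<and> {e\<in>Ed. sr e = v} \<noteq> {} \<longrightarrow>
        P v = (\<Sum>e\<in>{e\<in>Ed. sr e = v}. S e * cstar (S e)))"

text \<open>Vertex (v_i,k) is the pair (i,k); edge (e_ij,k) is the triple (i,j,k).\<close>
definition Lam_V :: "nat \<Rightarrow> nat \<Rightarrow> (nat \<times> nat) set" where
  "Lam_V n r = {(i,k). i \<le> n \<and> k < r}"

definition Lam_E :: "nat \<Rightarrow> nat \<Rightarrow> (nat \<times> nat \<times> nat) set" where
  "Lam_E n r = {(i,j,k). i \<le> j \<and> j \<le> n \<and> k < r}"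

definition Lam_src :: "nat \<Rightarrow> (nat \<Rightarrow> nat) \<Rightarrow> nat \<times> nat \<times> nat \<Rightarrow> nat \<times> nat" where
  "Lam_src r m e = (case e of (i,j,k) \<Rightarrow> (i, nat ((int k - int (m i)) mod int r)))"

definition Lam_rng :: "nat \<times> nat \<times> nat \<Rightarrow> nat \<times> nat" where
  "Lam_rng e = (case e of (i,j,k) \<Rightarrow> (j,k))"

definition Lam_path :: "nat \<Rightarrow> nat \<Rightarrow> (nat \<Rightarrow> nat) \<Rightarrow> (nat \<times> nat \<times> nat) list \<Rightarrow> bool" where
  "Lam_path n r m es \<longleftrightarrow> es \<noteq> [] \<and> set es \<subseteq> Lam_E n r \<and>
     (\<forall>q. Suc q < length es \<longrightarrow> Lam_rng (es ! q) = Lam_src r m (es ! Suc q))"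

definition admissible :: "nat \<Rightarrow> nat \<Rightarrow> (nat \<Rightarrow> nat) \<Rightarrow> nat \<Rightarrow> nat \<Rightarrow> nat \<Rightarrow> nat
    \<Rightarrow> (nat \<times> nat \<times> nat) list \<Rightarrow> bool" where
  "admissible n r m i s j t es \<longleftrightarrow> Lam_path n r m es \<and>
     Lam_src r m (hd es) = (i,s) \<and> Lam_rng (last es) = (j,t) \<and>
     (\<forall>q. Suc q < length es \<longrightarrow>
        Lam_rng (es ! q) \<notin> {(l,k). i \<le> l \<and> l \<le> j \<and> k < gcd (m l) r})"

definition n_paths :: "nat \<Rightarrow> nat \<Rightarrow> (nat \<Rightarrow> nat) \<Rightarrow> nat \<Rightarrow> nat \<Rightarrow> nat \<Rightarrow> nat \<Rightarrow> nat" where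
  "n_paths n r m i j s t = card {es. admissible n r m i s j t es}"

inductive_set Hset :: "nat \<Rightarrow> nat \<Rightarrow> (nat \<Rightarrow> nat) \<Rightarrow> (nat \<times> nat) set"
  for n r m where
  base: "i \<le> n \<Longrightarrow> (i,0) \<in> Hset n r m"
| step: "e \<in> Lam_E n r \<Longrightarrow> Lam_src r m e \<in> Hset n r m \<Longrightarrow> Lam_rng e \<in> Hset n r m"

definition S_set :: "nat \<Rightarrow> nat \<Rightarrow> (nat \<Rightarrow> nat) \<Rightarrow> nat \<Rightarrow> nat set" where
  "S_set n r m i = {k. k < gcd (m i) r \<and> (i,k) \<in> Hset n r m}"

text \<open>Vertex v_i^k is (i,k); edge e_{ij;a}^{st} is (i,j,s,t,a).\<close>
definition Lbar_V :: "nat \<Rightarrow> nat \<Rightarrow> (nat \<Rightarrow> nat) \<Rightarrow> (nat \<times> nat) set" where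
  "Lbar_V n r m = {(i,k). i \<le> n \<and> k \<in> S_set n r m i}"

definition Lbar_E :: "nat \<Rightarrow> nat \<Rightarrow> (nat \<Rightarrow> nat) \<Rightarrow> (nat \<times> nat \<times> nat \<times> nat \<times> nat) set" where
  "Lbar_E n r m = {(i,j,s,t,a). i \<le> j \<and> j \<le> n \<and> s \<in> S_set n r m i \<and> t \<in> S_set n r m j \<and>
      1 \<le> a \<and> a \<le> n_paths n r m i j s t}"

definition Lbar_src :: "nat \<times> nat \<times> nat \<times> nat \<times> nat \<Rightarrow> nat \<times> nat" where
  "Lbar_src e = (case e of (i,j,s,t,a) \<Rightarrow> (i,s))"

definition Lbar_rng :: "nat \<times> nat \<times> nat \<times> nat \<times> nat \<Rightarrow> nat \<times> nat" where
  "Lbar_rng e = (case e of (i,j,s,t,a) \<Rightarrow> (j,t))"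

end

theory Submission
  imports Defs
begin

lemma cstar_zero: "cstar (0::'a::cstar_algebra) = 0"
  by (metis add_cancel_right_right add_0 cstar_add)

lemma cstar_minus: "cstar (- x::'a::cstar_algebra) = - cstar x"
  by (metis add.right_inverse cstar_add cstar_zero neg_eq_iff_add_eq_0)

lemma cstar_diff: "cstar (x - y::'a::cstar_algebra) = cstar x - cstar y"
  by (metis cstar_add cstar_minus diff_conv_add_uminus)

lemma cstar_sum: "cstar (sum f A) = (\<Sum>x\<in>A. cstar (f x::'a::cstar_algebra))"
proof (cases "finite A")
  case True then show ?thesis by (induction A rule: finite_induct) (auto simp: cstar_zero cstar_add)
qed (simp add: cstar_zero)

lemma partial_iso:
  fixes s p :: "'a::cstar_algebra"
  assumes "cstar s * s = p" "p * p = p"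
  shows "s * p = s"
proof -
  define x where "x = s - s * p"
  have cp: "cstar p = p" using assms(1) by (metis cstar_cstar cstar_mult)
  have cx: "cstar x = cstar s - p * cstar s" unfolding x_def by (simp add: cstar_diff cstar_mult cp)
  have "cstar x * x = cstar s * s - cstar s * s * p - p * (cstar s * s) + p * (cstar s * s) * p"
    unfolding cx by (simp add: x_def algebra_simps)
  also have "\<dots> = 0" using assms by (simp add: mult.assoc)
  finally have "norm x ^ 2 = 0" by (metis cstar_identity norm_zero)
  then show ?thesis unfolding x_def by simp
qed

lemma modstep: "(k::nat) < r \<Longrightarrow> v = nat ((int k - int a) mod int r) \<Longrightarrow> k = (v + a) mod r"
  by (smt (verit, del_insts) int_ops(5) mod_add_left_eq nat_0_le nat_int
    nat_int_comparison(3) of_nat_0_le_iff of_nat_mod pos_mod_sign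
    verit_comp_simplify1(3) zmod_trivial_iff)

lemma edge_facts:
  assumes "e \<in> Lam_E n r"
  shows "fst (Lam_src r m e) \<le> fst (Lam_rng e)" "fst (Lam_rng e) \<le> n" "snd (Lam_rng e) < r"
    "fst (Lam_src r m e) \<le> n"
  using assms by (auto simp: Lam_E_def Lam_src_def Lam_rng_def)

lemma path_mono1:
  assumes "Lam_path n r m es" "Suc q < length es"
  shows "fst (Lam_rng (es!q)) \<le> fst (Lam_rng (es!Suc q))"
proof -
  have "es!Suc q \<in> Lam_E n r" using assms unfolding Lam_path_def by (meson nth_mem subsetD)
  moreover have "Lam_rng (es!q) = Lam_src r m (es!Suc q)" using assms unfolding Lam_path_def by blast
  ultimately show ?thesis using edge_facts(1) by metis
qed

lemma path_mono:
  assumes "Lam_path n r m es" "q \<le> q'" "q' < length es"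
  shows "fst (Lam_rng (es!q)) \<le> fst (Lam_rng (es!q'))"
  using assms(2,3)
proof (induction q' rule: dec_induct)
  case base then show ?case by simp
next
  case (step k)
  then show ?case using path_mono1[OF assms(1), of k] by simp
qed

lemma path_first:
  assumes "Lam_path n r m es"
  shows "fst (Lam_src r m (hd es)) \<le> fst (Lam_rng (es!0))"
proof -
  have "es \<noteq> []" "set es \<subseteq> Lam_E n r" using assms unfolding Lam_path_def by auto
  then have "hd es \<in> Lam_E n r" "hd es = es!0" by (auto simp: hd_conv_nth)
  then show ?thesis using edge_facts(1) by metis
qed

lemma path_same:
  assumes "Lam_path n r m es" "Suc q < length es"
    "fst (Lam_rng (es!Suc q)) = fst (Lam_rng (es!q))"
  shows "snd (Lam_rng (es!Suc q)) = (snd (Lam_rng (es!q)) + m (fst (Lam_rng (es!q)))) mod r"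
proof -
  have mem: "es!Suc q \<in> Lam_E n r" using assms unfolding Lam_path_def by (meson nth_mem subsetD)
  have eq: "Lam_rng (es!q) = Lam_src r m (es!Suc q)" using assms unfolding Lam_path_def by blast
  obtain a b k where abk: "es!Suc q = (a,b,k)" by (cases "es!Suc q") auto
  have kr: "k < r" using mem abk by (simp add: Lam_E_def)
  have "Lam_rng (es!q) = (a, nat ((int k - int (m a)) mod int r))" using eq abk by (simp add: Lam_src_def)
  then show ?thesis using modstep[OF kr] abk by (simp add: Lam_rng_def)
qed

lemma nt: assumes "0 < (r::nat)" "0 < m" "k0 < r" shows "\<exists>p<r. (k0 + p*m) mod r < gcd m r"
proof -
  define g where "g = gcd m r"
  have gpos: "0 < g" using assms g_def by simp
  have gr: "g \<le> r" using assms g_def by (simp add: gcd_le2_nat)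
  define c where "c = k0 - k0 mod g"
  have cle: "c \<le> k0" using c_def by simp
  have gc: "g dvd c" unfolding c_def by (simp add: minus_mod_eq_mult_div)
  have gw: "g dvd (r - c)" using gc g_def by (simp add: dvd_diff_nat)
  then obtain w' where w': "r - c = g * w'" by blast
  obtain x y where xy: "m * x = r * y + g" using bezout_nat[of m r] assms g_def by auto
  define p0 where "p0 = x * w'"
  have mp0: "p0 * m = r * (y * w') + (r - c)" unfolding p0_def using xy w'
    by (metis add_mult_distrib mult.assoc mult.commute)
  have "(k0 + (p0 mod r) * m) mod r = (k0 + p0 * m) mod r" by (metis mod_add_right_eq mod_mult_left_eq)
  also have "\<dots> = (k0 + (r - c)) mod r" unfolding mp0 by (simp add: add.assoc[symmetric] add.commute)
  also have "k0 + (r - c) = (k0 - c) + r" using cle assms by simp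
  also have "(k0 - c) + r = k0 mod g + r"
  proof -
    have h: "k0 mod g \<le> k0" by (rule mod_less_eq_dividend)
    show ?thesis using h c_def by arith
  qed
  also have "(k0 mod g + r) mod r = k0 mod g"
  proof -
    have "k0 mod g < g" using gpos by (rule mod_less_divisor)
    then have "k0 mod g < r" using gr by linarith
    then show ?thesis by simp
  qed
  finally have e: "(k0 + (p0 mod r) * m) mod r = k0 mod g" .
  have "p0 mod r < r" using assms(1) by (rule mod_less_divisor)
  moreover have "k0 mod g < gcd m r" using gpos g_def by simp
  ultimately show ?thesis using e by metis
qed

lemma len_bound:
  assumes adm: "admissible n r m i s j t es" and r1: "r \<ge> 1" and mpos: "\<forall>l\<le>n. m l \<ge> 1"
  shows "length es \<le> (n+1)*r"
proof -
  define N where "N = length es"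
  define L where "L q = fst (Lam_rng (es!q))" for q
  define V where "V q = snd (Lam_rng (es!q))" for q
  have lp: "Lam_path n r m es" and hd: "Lam_src r m (hd es) = (i,s)" and lst: "Lam_rng (last es) = (j,t)"
    and forb: "\<And>q. Suc q < N \<Longrightarrow> Lam_rng (es ! q) \<notin> {(l,k). i \<le> l \<and> l \<le> j \<and> k < gcd (m l) r}"
    using adm unfolding admissible_def N_def by auto
  have ne: "es \<noteq> []" and sub: "set es \<subseteq> Lam_E n r" using lp unfolding Lam_path_def by auto
  have N0: "N \<ge> 1" using ne N_def by (simp add: Suc_leI)
  have mono: "\<And>q q'. q \<le> q' \<Longrightarrow> q' < N \<Longrightarrow> L q \<le> L q'"
    using path_mono[OF lp] unfolding L_def N_def by blast
  have iv: "\<And>q. q < N \<Longrightarrow> i \<le> L q"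
  proof -
    fix q assume "q < N"
    then have "L 0 \<le> L q" using mono by simp
    moreover have "i \<le> L 0" using path_first[OF lp] hd unfolding L_def by simp
    ultimately show "i \<le> L q" by simp
  qed
  have jv: "\<And>q. q < N \<Longrightarrow> L q \<le> j"
  proof -
    fix q assume "q < N"
    then have "L q \<le> L (N - 1)" using mono by simp
    moreover have "L (N - 1) = j" using lst ne unfolding L_def N_def by (simp add: last_conv_nth)
    ultimately show "L q \<le> j" by simp
  qed
  have ln: "\<And>q. q < N \<Longrightarrow> L q \<le> n \<and> V q < r"
    using sub edge_facts(2,3) unfolding L_def V_def N_def by (meson nth_mem subsetD)
  have key: "\<And>q0. q0 + (r-1) < N - 1 \<Longrightarrow> L q0 < L (q0 + (r-1))"
  proof (rule ccontr)
    fix q0 assume q0: "q0 + (r-1) < N - 1" and nl: "\<not> L q0 < L (q0 + (r-1))"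
    define l where "l = L q0"
    have same: "\<And>p. p \<le> r-1 \<Longrightarrow> L (q0+p) = l"
    proof -
      fix p assume "p \<le> r-1"
      then have "L q0 \<le> L (q0+p)" "L (q0+p) \<le> L (q0 + (r-1))" using mono q0 by auto
      then show "L (q0+p) = l" using nl l_def by simp
    qed
    have vals: "\<And>p. p \<le> r-1 \<Longrightarrow> V (q0+p) = (V q0 + p * m l) mod r"
    proof -
      fix p assume "p \<le> r-1"
      then show "V (q0+p) = (V q0 + p * m l) mod r"
      proof (induction p)
        case 0
        then show ?case using ln[of q0] q0 by simp
      next
        case (Suc p)
        have s1: "Suc (q0+p) < length es" using Suc.prems q0 N_def by simp
        have "L (Suc (q0+p)) = L (q0+p)" using same Suc.prems by (metis add_Suc_right less_imp_le Suc_le_lessD)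
        then have "V (Suc (q0+p)) = (V (q0+p) + m (L (q0+p))) mod r"
          using path_same[OF lp s1] unfolding L_def V_def by simp
        also have "\<dots> = ((V q0 + p * m l) mod r + m l) mod r" using Suc same by simp
        also have "\<dots> = (V q0 + Suc p * m l) mod r" by (metis mod_add_left_eq add.assoc mult_Suc add.commute)
        finally show ?case by simp
      qed
    qed
    have lle: "l \<le> n" using ln[of q0] q0 l_def by simp
    have "\<exists>p<r. (V q0 + p * m l) mod r < gcd (m l) r"
    proof (rule nt)
      show "0 < r" using r1 by simp
      show "0 < m l" using mpos lle by (simp add: Suc_le_eq)
      show "V q0 < r" using ln[of q0] q0 by simp
    qed
    then obtain p where p: "p < r" "(V q0 + p * m l) mod r < gcd (m l) r" by blast
    have pr: "p \<le> r-1" using p by simp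
    have sq: "Suc (q0+p) < N" using pr q0 by simp
    have "Lam_rng (es!(q0+p)) = (L (q0+p), V (q0+p))" unfolding L_def V_def by simp
    also have "\<dots> = (l, (V q0 + p * m l) mod r)" using same[OF pr] vals[OF pr] by simp
    finally have "Lam_rng (es!(q0+p)) \<in> {(l,k). i \<le> l \<and> l \<le> j \<and> k < gcd (m l) r}"
      using p(2) iv[of "q0+p"] jv[of "q0+p"] sq same[OF pr] by simp
    then show False using forb[OF sq] by blast
  qed
  have ind: "\<And>k. k*(r-1) < N - 1 \<Longrightarrow> L 0 + k \<le> L (k*(r-1))"
  proof -
    fix k show "k*(r-1) < N - 1 \<Longrightarrow> L 0 + k \<le> L (k*(r-1))"
    proof (induction k)
      case 0 then show ?case by simp
    next
      case (Suc k)
      have a: "k*(r-1) + (r-1) < N - 1" using Suc.prems by (simp add: add.commute)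
      then have "k*(r-1) < N - 1" by simp
      then have "L 0 + k \<le> L (k*(r-1))" using Suc.IH by simp
      moreover have "L (k*(r-1)) < L (k*(r-1) + (r-1))" using key[OF a] .
      ultimately show ?case by (simp add: add.commute)
    qed
  qed
  have "N - 1 \<le> (n+1)*(r-1)"
  proof (rule ccontr)
    assume "\<not> N - 1 \<le> (n+1)*(r-1)"
    then have h: "(n+1)*(r-1) < N - 1" by simp
    then have "L 0 + (n+1) \<le> L ((n+1)*(r-1))" using ind by blast
    moreover have "L ((n+1)*(r-1)) \<le> n" using ln h by simp
    ultimately show False by simp
  qed
  then have "N \<le> (n+1)*(r-1) + 1" by simp
  also have "\<dots> \<le> (n+1)*r" using r1 by (simp add: algebra_simps)
  finally show ?thesis using N_def by simp
qed

lemma finite_LamE: "finite (Lam_E n r)"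
proof -
  have "Lam_E n r \<subseteq> {..n} \<times> {..n} \<times> {..<r}" by (auto simp: Lam_E_def)
  then show ?thesis by (rule finite_subset) auto
qed

lemma finite_adm:
  assumes r1: "r \<ge> 1" and mpos: "\<forall>l\<le>n. m l \<ge> 1"
  shows "finite {es. admissible n r m i s j t es}"
proof -
  have "{es. admissible n r m i s j t es} \<subseteq> {es. set es \<subseteq> Lam_E n r \<and> length es \<le> (n+1)*r}"
    using len_bound[OF _ r1 mpos] by (auto simp: admissible_def Lam_path_def)
  then show ?thesis using finite_lists_length_le[OF finite_LamE] by (rule finite_subset)
qed


lemma sub_gen: "cstar_subalgebra (cstar_gen G)"
  unfolding cstar_gen_def cstar_subalgebra_def by (auto intro!: closed_Inter)

lemma gen_incl: "G \<subseteq> cstar_gen G"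
  unfolding cstar_gen_def by auto

lemma gen_min: "G \<subseteq> B \<Longrightarrow> cstar_subalgebra B \<Longrightarrow> cstar_gen G \<subseteq> B"
  unfolding cstar_gen_def by auto

lemma sub_sum: assumes "cstar_subalgebra B" "\<forall>x\<in>A. f x \<in> B" shows "sum f A \<in> B"
proof (cases "finite A")
  case True
  then show ?thesis using assms(2)
    by (induction A rule: finite_induct) (use assms(1) in \<open>auto simp: cstar_subalgebra_def\<close>)
qed (use assms(1) in \<open>auto simp: cstar_subalgebra_def\<close>)

lemma ideal_sum: assumes "closed_ideal_in D J" "\<forall>x\<in>A. f x \<in> J" shows "sum f A \<in> J"
proof (cases "finite A")
  case True
  then show ?thesis using assms(2)
    by (induction A rule: finite_induct) (use assms(1) in \<open>auto simp: closed_ideal_in_def\<close>)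
qed (use assms(1) in \<open>auto simp: closed_ideal_in_def\<close>)

lemma orth_sum:
  fixes P :: "'v \<Rightarrow> 'a::cstar_algebra"
  assumes "finite V" "v \<in> V" "P v * P v = P v" "\<forall>w\<in>V. w \<noteq> v \<longrightarrow> P v * P w = 0 \<and> P w * P v = 0"
  shows "P v * sum P V = P v" "sum P V * P v = P v"
proof -
  have "P v * sum P V = (\<Sum>w\<in>V. P v * P w)" by (simp add: sum_distrib_left)
  also have "\<dots> = P v * P v + (\<Sum>w\<in>V - {v}. P v * P w)" using assms by (simp add: sum.remove)
  also have "(\<Sum>w\<in>V - {v}. P v * P w) = 0" using assms(4) by (intro sum.neutral) auto
  finally show "P v * sum P V = P v" using assms by simp
  have "sum P V * P v = (\<Sum>w\<in>V. P w * P v)" by (simp add: sum_distrib_right)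
  also have "\<dots> = P v * P v + (\<Sum>w\<in>V - {v}. P w * P v)" using assms by (simp add: sum.remove)
  also have "(\<Sum>w\<in>V - {v}. P w * P v) = 0" using assms(4) by (intro sum.neutral) auto
  finally show "sum P V * P v = P v" using assms by simp
qed

theorem lemma3p11:
  fixes n r :: nat and m :: "nat \<Rightarrow> nat"
    and P :: "nat \<times> nat \<Rightarrow> 'a::cstar_algebra"
    and S :: "nat \<times> nat \<times> nat \<times> nat \<times> nat \<Rightarrow> 'a"
  assumes "n \<ge> 1" and "r \<ge> 1" and "\<forall>i\<le>n. m i \<ge> 1"
    and "CK_family (Lbar_V n r m) (Lbar_E n r m) Lbar_src Lbar_rng P S"
  shows "ideal_gen_in (cstar_gen (P ` Lbar_V n r m \<union> S ` Lbar_E n r m)) (\<Sum>i\<le>n. P (i,0))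
           = cstar_gen (P ` Lbar_V n r m \<union> S ` Lbar_E n r m)"
proof -
  define V where "V = Lbar_V n r m"
  define E where "E = Lbar_E n r m"
  define D where "D = cstar_gen (P ` V \<union> S ` E)"
  define p where "p = (\<Sum>i\<le>n. P (i,0))"
  define Q where "Q = sum P V"
  have r1: "r \<ge> 1" and mpos: "\<forall>l\<le>n. m l \<ge> 1" using assms by auto
  have CK1: "\<And>v. v \<in> V \<Longrightarrow> P v * P v = P v \<and> cstar (P v) = P v"
    and CK2: "\<And>v w. v \<in> V \<Longrightarrow> w \<in> V \<Longrightarrow> v \<noteq> w \<Longrightarrow> P v * P w = 0"
    and CK3: "\<And>e. e \<in> E \<Longrightarrow> cstar (S e) * S e = P (Lbar_rng e)"
    and CK4: "\<And>e. e \<in> E \<Longrightarrow> P (Lbar_src e) * (S e * cstar (S e)) = S e * cstar (S e)"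
    using assms(4) unfolding CK_family_def V_def E_def by auto
  have Dsub: "cstar_subalgebra D" unfolding D_def by (rule sub_gen)
  have gens: "P ` V \<union> S ` E \<subseteq> D" unfolding D_def by (rule gen_incl)
  have Vfin: "finite V"
  proof -
    have "V \<subseteq> {..n} \<times> {..<r}"
    proof
      fix x assume "x \<in> V"
      then obtain i k where x: "x = (i,k)" "i \<le> n" "k < gcd (m i) r"
        unfolding V_def Lbar_V_def S_set_def by auto
      have "gcd (m i) r \<le> r" using r1 by (simp add: gcd_le2_nat)
      then show "x \<in> {..n} \<times> {..<r}" using x by auto
    qed
    then show ?thesis by (rule finite_subset) auto
  qed
  have V0: "\<And>i. i \<le> n \<Longrightarrow> (i,0) \<in> V"
    using r1 by (auto simp: V_def Lbar_V_def S_set_def intro: Hset.base)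
  have Erng: "\<And>e. e \<in> E \<Longrightarrow> Lbar_rng e \<in> V \<and> Lbar_src e \<in> V"
    by (auto simp: E_def Lbar_E_def V_def Lbar_V_def Lbar_rng_def Lbar_src_def)
  have pD: "p \<in> D" unfolding p_def using gens V0 by (intro sub_sum[OF Dsub]) auto
  have SP: "\<And>e. e \<in> E \<Longrightarrow> S e * P (Lbar_rng e) = S e"
    using CK3 CK1 Erng partial_iso by blast
  have PS: "\<And>e. e \<in> E \<Longrightarrow> P (Lbar_src e) * S e = S e"
  proof -
    fix e assume e: "e \<in> E"
    have "P (Lbar_src e) * S e = P (Lbar_src e) * (S e * (cstar (S e) * S e))" using SP[OF e] CK3[OF e] by simp
    also have "\<dots> = (P (Lbar_src e) * (S e * cstar (S e))) * S e" by (simp add: mult.assoc)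
    also have "\<dots> = S e" using CK4[OF e] SP[OF e] CK3[OF e] by (simp add: mult.assoc)
    finally show "P (Lbar_src e) * S e = S e" .
  qed
  have PQ: "\<And>v. v \<in> V \<Longrightarrow> P v * Q = P v \<and> Q * P v = P v"
    unfolding Q_def using orth_sum[OF Vfin] CK1 CK2 by metis
  have cQ: "cstar Q = Q" unfolding Q_def cstar_sum using CK1 by simp
  define U where "U = {d. d * Q = d \<and> Q * d = d}"
  have Usub: "cstar_subalgebra U"
    unfolding cstar_subalgebra_def
  proof (intro conjI ballI allI)
    show "closed U" unfolding U_def
      by (intro closed_Collect_conj closed_Collect_eq continuous_intros)
    show "0 \<in> U" unfolding U_def by simp
    fix x y assume x: "x \<in> U"
    show "y \<in> U \<Longrightarrow> x + y \<in> U" using x unfolding U_def by (simp add: algebra_simps)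
    show "y \<in> U \<Longrightarrow> x * y \<in> U" using x unfolding U_def by (simp add: mult.assoc) (metis mult.assoc)
  next
    fix c x assume "x \<in> U" then show "cscale c x \<in> U" unfolding U_def
      by (metis (mono_tags, lifting) cscale_mult_left cscale_mult_right mem_Collect_eq)
  next
    fix x assume "x \<in> U" then show "cstar x \<in> U" unfolding U_def
      by (metis (mono_tags, lifting) cQ cstar_mult mem_Collect_eq)
  qed
  have gU: "P ` V \<union> S ` E \<subseteq> U"
  proof
    fix x assume "x \<in> P ` V \<union> S ` E"
    then show "x \<in> U"
    proof
      assume "x \<in> P ` V" then show "x \<in> U" using PQ U_def by auto
    next
      assume "x \<in> S ` E"
      then obtain e where e: "e \<in> E" "x = S e" by auto
      have "S e * Q = S e * (P (Lbar_rng e) * Q)" using SP[OF e(1)] by (metis mult.assoc)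
      also have "\<dots> = S e" using PQ Erng e SP by simp
      finally have 1: "S e * Q = S e" .
      have "Q * S e = (Q * P (Lbar_src e)) * S e" using PS[OF e(1)] by (metis mult.assoc)
      also have "\<dots> = S e" using PQ Erng e PS by simp
      finally show "x \<in> U" using 1 e U_def by simp
    qed
  qed
  have DU: "D \<subseteq> U" unfolding D_def by (rule gen_min[OF gU Usub])
  have "D \<subseteq> J" if J: "closed_ideal_in D J" "p \<in> J" for J
  proof -
    have JD: "\<And>d x. d \<in> D \<Longrightarrow> x \<in> J \<Longrightarrow> d * x \<in> J \<and> x * d \<in> J" using J(1) unfolding closed_ideal_in_def by blast
    have PJ0: "\<And>i. i \<le> n \<Longrightarrow> P (i,0) \<in> J"
    proof -
      fix i assume i: "i \<le> n"
      have "P (i,0) * p = P (i,0)" unfolding p_def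
      proof (rule orth_sum(1)[of "{..n}" i "\<lambda>i. P (i,0)"])
        show "finite {..n}" by simp
        show "i \<in> {..n}" using i by simp
        show "P (i,0) * P (i,0) = P (i,0)" using CK1 V0 i by blast
        show "\<forall>w\<in>{..n}. w \<noteq> i \<longrightarrow> P (i,0) * P (w,0) = 0 \<and> P (w,0) * P (i,0) = 0"
          using CK2 V0 i by auto
      qed
      moreover have "P (i,0) \<in> D" using gens V0 i by auto
      ultimately show "P (i,0) \<in> J" using JD J(2) by metis
    qed
    have edgeJ: "\<And>e. e \<in> E \<Longrightarrow> P (Lbar_src e) \<in> J \<Longrightarrow> P (Lbar_rng e) \<in> J"
    proof -
      fix e assume e: "e \<in> E" and sJ: "P (Lbar_src e) \<in> J"
      have sD: "S e \<in> D" using gens e by auto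
      then have csD: "cstar (S e) \<in> D" using Dsub unfolding cstar_subalgebra_def by blast
      have ssD: "S e * cstar (S e) * S e \<in> D" using sD csD Dsub unfolding cstar_subalgebra_def by blast
      have "P (Lbar_rng e) = P (Lbar_rng e) * P (Lbar_rng e)" using CK1 Erng e by simp
      also have "\<dots> = cstar (S e) * (S e * cstar (S e)) * S e" using CK3[OF e] by (metis mult.assoc)
      also have "\<dots> = cstar (S e) * (P (Lbar_src e) * (S e * cstar (S e))) * S e" using CK4[OF e] by simp
      also have "\<dots> = (cstar (S e) * P (Lbar_src e)) * (S e * cstar (S e) * S e)" by (simp add: mult.assoc)
      finally show "P (Lbar_rng e) \<in> J" using JD csD ssD sJ by metis
    qed
    have toJ: "P v \<in> J" if v: "v \<in> V" and w: "w \<in> V" "P w \<in> J"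
      and path: "v = w \<or> (\<exists>es. Lam_path n r m es \<and> Lam_src r m (hd es) = w \<and> Lam_rng (last es) = v \<and>
          (\<forall>q. Suc q < length es \<longrightarrow> gcd (m (fst (Lam_rng (es!q)))) r \<le> snd (Lam_rng (es!q))))" for v w
    proof (cases "v = w")
      case True then show ?thesis using w by simp
    next
      case False
      then obtain es where es: "Lam_path n r m es" "Lam_src r m (hd es) = w" "Lam_rng (last es) = v"
        "\<forall>q. Suc q < length es \<longrightarrow> gcd (m (fst (Lam_rng (es!q)))) r \<le> snd (Lam_rng (es!q))"
        using path by blast
      obtain i s where ws: "w = (i,s)" by (cases w)
      obtain l k where vs: "v = (l,k)" by (cases v)
      have ne: "es \<noteq> []" using es(1) unfolding Lam_path_def by simp
      have adm: "admissible n r m i s l k es" unfolding admissible_def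
        using es ws vs by force
      have "n_paths n r m i l s k \<ge> 1"
      proof -
        have "es \<in> {es. admissible n r m i s l k es}" using adm by simp
        then have "{es. admissible n r m i s l k es} \<noteq> {}" by blast
        then show ?thesis unfolding n_paths_def using finite_adm[OF r1 mpos]
          by (simp add: Suc_le_eq card_gt_0_iff)
      qed
      moreover have "i \<le> l"
      proof -
        have "i \<le> fst (Lam_rng (es!0))" using path_first[OF es(1)] es(2) ws by simp
        also have "\<dots> \<le> fst (Lam_rng (es!(length es - 1)))" using path_mono[OF es(1)] ne by simp
        also have "\<dots> = l" using es(3) vs ne by (simp add: last_conv_nth)
        finally show ?thesis .
      qed
      ultimately have eE: "(i,l,s,k,1) \<in> E" using v w ws vs
        by (auto simp: E_def Lbar_E_def V_def Lbar_V_def)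
      show ?thesis using edgeJ[OF eE] w ws vs by (simp add: Lbar_src_def Lbar_rng_def)
    qed
    have reach: "x \<in> Hset n r m \<Longrightarrow> \<exists>w\<in>V. P w \<in> J \<and> (x = w \<or> (\<exists>es. Lam_path n r m es \<and> Lam_src r m (hd es) = w \<and> Lam_rng (last es) = x \<and>
          (\<forall>q. Suc q < length es \<longrightarrow> gcd (m (fst (Lam_rng (es!q)))) r \<le> snd (Lam_rng (es!q)))))" for x
    proof (induction rule: Hset.induct)
      case (base i)
      then show ?case using V0 PJ0 by blast
    next
      case (step e)
      then obtain w where w: "w \<in> V" "P w \<in> J" and
        pth: "Lam_src r m e = w \<or> (\<exists>es. Lam_path n r m es \<and> Lam_src r m (hd es) = w \<and> Lam_rng (last es) = Lam_src r m e \<and>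
          (\<forall>q. Suc q < length es \<longrightarrow> gcd (m (fst (Lam_rng (es!q)))) r \<le> snd (Lam_rng (es!q))))" by blast
      obtain l k where lk: "Lam_src r m e = (l,k)" by (cases "Lam_src r m e")
      have ln: "l \<le> n" using edge_facts(4)[where m=m, OF step(1)] lk by simp
      show ?case
      proof (cases "k < gcd (m l) r")
        case True
        have vV: "(l,k) \<in> V" using True ln step(2) lk by (auto simp: V_def Lbar_V_def S_set_def)
        have PJ: "P (l,k) \<in> J" using toJ[OF vV w] pth lk by simp
        have "Lam_path n r m [e]" using step(1) by (simp add: Lam_path_def)
        then show ?thesis using vV PJ lk by (intro bexI[of _ "(l,k)"]) (auto intro!: exI[of _ "[e]"])
      next
        case False
        note kge = False
        have "Lam_src r m e \<noteq> w" using False w lk by (auto simp: V_def Lbar_V_def S_set_def)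
        then obtain es where es: "Lam_path n r m es" "Lam_src r m (hd es) = w" "Lam_rng (last es) = Lam_src r m e"
          "\<forall>q. Suc q < length es \<longrightarrow> gcd (m (fst (Lam_rng (es!q)))) r \<le> snd (Lam_rng (es!q))"
          using pth by blast
        have ne: "es \<noteq> []" using es(1) unfolding Lam_path_def by simp
        have p1: "Lam_path n r m (es @ [e])" unfolding Lam_path_def
        proof (intro conjI allI impI)
          show "es @ [e] \<noteq> []" by simp
          show "set (es @ [e]) \<subseteq> Lam_E n r" using es(1) step(1) unfolding Lam_path_def by simp
          fix q assume q: "Suc q < length (es @ [e])"
          show "Lam_rng ((es @ [e]) ! q) = Lam_src r m ((es @ [e]) ! Suc q)"
          proof (cases "Suc q < length es")
            case True then show ?thesis using es(1) unfolding Lam_path_def by (simp add: nth_append)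
          next
            case False
            then have "q = length es - 1" using q by simp
            then show ?thesis using es(3) ne False by (simp add: nth_append last_conv_nth)
          qed
        qed
        have p2: "\<forall>q. Suc q < length (es @ [e]) \<longrightarrow> gcd (m (fst (Lam_rng ((es @ [e])!q)))) r \<le> snd (Lam_rng ((es @ [e])!q))"
        proof (intro allI impI)
          fix q assume q: "Suc q < length (es @ [e])"
          show "gcd (m (fst (Lam_rng ((es @ [e])!q)))) r \<le> snd (Lam_rng ((es @ [e])!q))"
          proof (cases "Suc q < length es")
            case True then show ?thesis using es(4) by (simp add: nth_append)
          next
            case False
            then have "q = length es - 1" using q by simp
            then show ?thesis using es(3) ne False lk kge by (simp add: nth_append last_conv_nth)
          qed
        qed
        show ?thesis using w p1 p2 es(2) ne by (intro bexI[of _ w]) (auto intro!: exI[of _ "es @ [e]"])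
      qed
    qed
    have allP: "\<And>v. v \<in> V \<Longrightarrow> P v \<in> J"
    proof -
      fix v assume v: "v \<in> V"
      then have "v \<in> Hset n r m" by (auto simp: V_def Lbar_V_def S_set_def)
      then obtain w where "w \<in> V" "P w \<in> J" "v = w \<or> (\<exists>es. Lam_path n r m es \<and> Lam_src r m (hd es) = w \<and> Lam_rng (last es) = v \<and>
          (\<forall>q. Suc q < length es \<longrightarrow> gcd (m (fst (Lam_rng (es!q)))) r \<le> snd (Lam_rng (es!q))))"
        using reach by blast
      then show "P v \<in> J" using toJ[OF v] by blast
    qed
    have QJ: "Q \<in> J" unfolding Q_def using allP by (intro ideal_sum[OF J(1)]) auto
    show "D \<subseteq> J"
    proof
      fix d assume d: "d \<in> D"
      then have "d = d * Q" using DU U_def by auto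
      then show "d \<in> J" using JD[OF d QJ] by metis
    qed
  qed
  then have "D \<subseteq> ideal_gen_in D p" unfolding ideal_gen_in_def by blast
  moreover have "ideal_gen_in D p \<subseteq> D"
  proof -
    have "closed_ideal_in D D" using Dsub unfolding closed_ideal_in_def cstar_subalgebra_def by blast
    then show ?thesis unfolding ideal_gen_in_def using pD by blast
  qed
  ultimately show ?thesis unfolding D_def V_def E_def p_def by blast
qed

end
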